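(* Let $\pi_2$ be the five-dimensional complex associative algebra with basis $e_1,\dots,e_5$ and nonzero products $e_1e_1=e_2$, $e_1e_2=e_2e_1=e_3$, $e_1e_4=e_4e_1=e_5$, $e_4e_4=e_5$ (all other products of basis elements are zero). The vector space $LocDer(\pi_2)$ of all local derivations of $\pi_2$ is a Lie algebra with respect to the bracket $[\nabla,\Delta]=\nabla\Delta-\Delta\nabla$; that is, $[\nabla,\Delta]\in LocDer(\pi_2)$ for all $\nabla,\Delta\in LocDer(\pi_2)$.
   Context: A derivation of an algebra $A$ is a linear map $D$ with $D(xy)=D(x)y+xD(y)$ for all $x,y\in A$. A linear map $\nabla:A\to A$ is a local derivation if for every $x\in A$ there is a derivation $D_x$ of $A$ (depending on $x$) with $\nabla(x)=D_x(x)$. *)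

theory Defs
  imports Complex_Main "HOL-Library.Function_Algebras"
begin

datatype idx = E1 | E2 | E3 | E4 | E5

lemma UNIV_idx: "(UNIV :: idx set) = {E1, E2, E3, E4, E5}"
  using idx.exhaust by auto

instance idx :: finite
  by standard (simp add: UNIV_idx)

type_synonym pi2 = "idx \<Rightarrow> complex"

definition basis_vec :: "idx \<Rightarrow> pi2" where
  "basis_vec i = (\<lambda>k. if k = i then 1 else 0)"

fun basis_prod :: "idx \<Rightarrow> idx \<Rightarrow> pi2" where
  "basis_prod E1 E1 = basis_vec E2"
| "basis_prod E1 E2 = basis_vec E3"
| "basis_prod E2 E1 = basis_vec E3"
| "basis_prod E1 E4 = basis_vec E5"
| "basis_prod E4 E1 = basis_vec E5"
| "basis_prod E4 E4 = basis_vec E5"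
| "basis_prod _ _ = (\<lambda>k. 0)"

definition pi2_mult :: "pi2 \<Rightarrow> pi2 \<Rightarrow> pi2" where
  "pi2_mult x y = (\<lambda>k. \<Sum>i\<in>UNIV. \<Sum>j\<in>UNIV. x i * y j * basis_prod i j k)"

definition clinear_pi2 :: "(pi2 \<Rightarrow> pi2) \<Rightarrow> bool" where
  "clinear_pi2 f \<longleftrightarrow> (\<forall>x y. f (x + y) = f x + f y)
      \<and> (\<forall>(c::complex) x. f (\<lambda>i. c * x i) = (\<lambda>i. c * f x i))"

definition derivation_pi2 :: "(pi2 \<Rightarrow> pi2) \<Rightarrow> bool" where
  "derivation_pi2 D \<longleftrightarrow> clinear_pi2 D
      \<and> (\<forall>x y. D (pi2_mult x y) = pi2_mult (D x) y + pi2_mult x (D y))"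

definition local_derivation_pi2 :: "(pi2 \<Rightarrow> pi2) \<Rightarrow> bool" where
  "local_derivation_pi2 N \<longleftrightarrow> clinear_pi2 N
      \<and> (\<forall>x. \<exists>D. derivation_pi2 D \<and> N x = D x)"

end

theory Submission
  imports Defs
begin

abbreviation "e j \<equiv> basis_vec j"

lemma pi2_mult_explicit:
  "pi2_mult x y = (\<lambda>k. case k of E1 \<Rightarrow> 0 | E2 \<Rightarrow> x E1 * y E1
     | E3 \<Rightarrow> x E1 * y E2 + x E2 * y E1 | E4 \<Rightarrow> 0
     | E5 \<Rightarrow> x E1 * y E4 + x E4 * y E1 + x E4 * y E4)"
  by (rule ext, rename_tac k, case_tac k)
     (simp_all add: pi2_mult_def UNIV_idx basis_vec_def)

definition Dp :: "complex \<Rightarrow> complex \<Rightarrow> complex \<Rightarrow> complex \<Rightarrow> complex \<Rightarrow> complex \<Rightarrow> complex \<Rightarrow> pi2 \<Rightarrow> pi2" where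
  "Dp a1 a2 a3 a4 a5 b3 b5 x = (\<lambda>k. case k of
      E1 \<Rightarrow> a1 * x E1
    | E2 \<Rightarrow> a2 * x E1 + 2 * a1 * x E2
    | E3 \<Rightarrow> a3 * x E1 + 2 * a2 * x E2 + 3 * a1 * x E3 + b3 * x E4
    | E4 \<Rightarrow> a4 * x E1 + (a1 + a4) * x E4
    | E5 \<Rightarrow> a5 * x E1 + 2 * a4 * x E2 + 2 * (a1 + a4) * x E5 + b5 * x E4)"

lemma Dp_apply:
  "Dp a1 a2 a3 a4 a5 b3 b5 x E1 = a1 * x E1"
  "Dp a1 a2 a3 a4 a5 b3 b5 x E2 = a2 * x E1 + 2 * a1 * x E2"
  "Dp a1 a2 a3 a4 a5 b3 b5 x E3 = a3 * x E1 + 2 * a2 * x E2 + 3 * a1 * x E3 + b3 * x E4"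
  "Dp a1 a2 a3 a4 a5 b3 b5 x E4 = a4 * x E1 + (a1 + a4) * x E4"
  "Dp a1 a2 a3 a4 a5 b3 b5 x E5 = a5 * x E1 + 2 * a4 * x E2 + 2 * (a1 + a4) * x E5 + b5 * x E4"
  by (simp_all add: Dp_def)

lemma Dp_derivation: "derivation_pi2 (Dp a1 a2 a3 a4 a5 b3 b5)"
  unfolding derivation_pi2_def clinear_pi2_def
  apply (intro conjI allI)
    apply (rule ext, rename_tac k, case_tac k; simp add: Dp_def algebra_simps)
   apply (rule ext, rename_tac k, case_tac k; simp add: Dp_def algebra_simps)
  apply (rule ext, rename_tac k, case_tac k; simp add: Dp_def pi2_mult_explicit algebra_simps)
  done

lemma decomp:
  "x = (\<lambda>i. x E1 * e E1 i) + (\<lambda>i. x E2 * e E2 i) + (\<lambda>i. x E3 * e E3 i)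
     + (\<lambda>i. x E4 * e E4 i) + (\<lambda>i. x E5 * e E5 i)"
  by (rule ext, rename_tac k, case_tac k) (simp_all add: basis_vec_def)

lemma lin_expand:
  assumes "clinear_pi2 f"
  shows "f x k = x E1 * f (e E1) k + x E2 * f (e E2) k + x E3 * f (e E3) k
     + x E4 * f (e E4) k + x E5 * f (e E5) k"
proof -
  have A: "\<And>x y. f (x + y) = f x + f y" and S: "\<And>c x. f (\<lambda>i. c * x i) = (\<lambda>i. c * f x i)"
    using assms unfolding clinear_pi2_def by blast+
  have "f x = f ((\<lambda>i. x E1 * e E1 i) + (\<lambda>i. x E2 * e E2 i) + (\<lambda>i. x E3 * e E3 i)
     + (\<lambda>i. x E4 * e E4 i) + (\<lambda>i. x E5 * e E5 i))"
    using decomp[of x] by simp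
  also have "\<dots> = (\<lambda>i. x E1 * f (e E1) i) + (\<lambda>i. x E2 * f (e E2) i) + (\<lambda>i. x E3 * f (e E3) i)
     + (\<lambda>i. x E4 * f (e E4) i) + (\<lambda>i. x E5 * f (e E5) i)"
    by (simp only: A S)
  finally show ?thesis by simp
qed

lemma der_char:
  assumes "derivation_pi2 D"
  shows "D = Dp (D (e E1) E1) (D (e E1) E2) (D (e E1) E3) (D (e E1) E4) (D (e E1) E5)
              (D (e E4) E3) (D (e E4) E5)"
proof -
  have lin: "clinear_pi2 D" and L: "\<And>x y. D (pi2_mult x y) = pi2_mult (D x) y + pi2_mult x (D y)"
    using assms unfolding derivation_pi2_def by blast+
  have m11: "pi2_mult (e E1) (e E1) = e E2" and m12: "pi2_mult (e E1) (e E2) = e E3"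
    and m14: "pi2_mult (e E1) (e E4) = e E5" and m44: "pi2_mult (e E4) (e E4) = e E5"
    by (rule ext, rename_tac k, case_tac k; simp add: pi2_mult_explicit basis_vec_def)+
  have d2: "D (e E2) = pi2_mult (D (e E1)) (e E1) + pi2_mult (e E1) (D (e E1))"
    using L[of "e E1" "e E1"] m11 by simp
  have d3: "D (e E3) = pi2_mult (D (e E1)) (e E2) + pi2_mult (e E1) (D (e E2))"
    using L[of "e E1" "e E2"] m12 by simp
  have d5a: "D (e E5) = pi2_mult (D (e E1)) (e E4) + pi2_mult (e E1) (D (e E4))"
    using L[of "e E1" "e E4"] m14 by simp
  have d5b: "D (e E5) = pi2_mult (D (e E4)) (e E4) + pi2_mult (e E4) (D (e E4))"
    using L[of "e E4" "e E4"] m44 by simp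
  have b1: "D (e E4) E1 = 0" using fun_cong[OF trans[OF sym[OF d5a] d5b], of E2]
    by (simp add: pi2_mult_explicit basis_vec_def)
  have b2: "D (e E4) E2 = 0" using fun_cong[OF trans[OF sym[OF d5a] d5b], of E3] b1
    by (simp add: pi2_mult_explicit basis_vec_def)
  have b4: "D (e E4) E4 = D (e E1) E1 + D (e E1) E4" using fun_cong[OF trans[OF sym[OF d5a] d5b], of E5] b1
    by (simp add: pi2_mult_explicit basis_vec_def)
  show ?thesis
  proof (rule ext, rule ext)
    fix x k
    show "D x k = Dp (D (e E1) E1) (D (e E1) E2) (D (e E1) E3) (D (e E1) E4) (D (e E1) E5)
              (D (e E4) E3) (D (e E4) E5) x k"
      unfolding lin_expand[OF lin, of x k] d3 d5b
      unfolding d2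
      apply (cases k)
      apply (simp_all add: b1 b2 b4 Dp_def pi2_mult_explicit)
      apply (simp_all add: basis_vec_def algebra_simps)
      done
  qed
qed

definition locmat :: "(pi2 \<Rightarrow> pi2) \<Rightarrow> bool" where
  "locmat N \<longleftrightarrow> N (e E2) E1 = 0 \<and> N (e E3) E1 = 0 \<and> N (e E4) E1 = 0 \<and> N (e E5) E1 = 0
    \<and> N (e E2) E4 = 0 \<and> N (e E3) E4 = 0 \<and> N (e E5) E4 = 0
    \<and> N (e E3) E2 = 0 \<and> N (e E4) E2 = 0 \<and> N (e E5) E2 = 0
    \<and> N (e E5) E3 = 0 \<and> N (e E3) E5 = 0
    \<and> N (e E4) E4 = N (e E1) E4 + N (e E1) E1
    \<and> N (e E5) E5 = N (e E2) E5 + N (e E2) E2"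

lemma loc_pt:
  assumes "local_derivation_pi2 N"
  shows "\<exists>a1 a2 a3 a4 a5 b3 b5. N x = Dp a1 a2 a3 a4 a5 b3 b5 x"
proof -
  obtain D where "derivation_pi2 D" "N x = D x"
    using assms unfolding local_derivation_pi2_def by blast
  then show ?thesis using der_char by metis
qed

lemma necessity:
  assumes loc: "local_derivation_pi2 N"
  shows "locmat N"
proof -
  have lin: "clinear_pi2 N" using loc unfolding local_derivation_pi2_def by blast
  obtain a1 a2 a3 a4 a5 b3 b5 where h2: "N (e E2) = Dp a1 a2 a3 a4 a5 b3 b5 (e E2)"
    using loc_pt[OF loc] by blast
  obtain c1 c2 c3 c4 c5 d3 d5 where h3: "N (e E3) = Dp c1 c2 c3 c4 c5 d3 d5 (e E3)"
    using loc_pt[OF loc] by blast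
  obtain f1 f2 f3 f4 f5 g3 g5 where h4: "N (e E4) = Dp f1 f2 f3 f4 f5 g3 g5 (e E4)"
    using loc_pt[OF loc] by blast
  obtain p1 p2 p3 p4 p5 q3 q5 where h5: "N (e E5) = Dp p1 p2 p3 p4 p5 q3 q5 (e E5)"
    using loc_pt[OF loc] by blast
  obtain r1 r2 r3 r4 r5 s3 s5 where h14: "N (e E1 - e E4) = Dp r1 r2 r3 r4 r5 s3 s5 (e E1 - e E4)"
    using loc_pt[OF loc] by blast
  obtain t1 t2 t3 t4 t5 u3 u5 where h25: "N (e E2 - e E5) = Dp t1 t2 t3 t4 t5 u3 u5 (e E2 - e E5)"
    using loc_pt[OF loc] by blast
  have z: "N (e E2) E1 = 0 \<and> N (e E3) E1 = 0 \<and> N (e E4) E1 = 0 \<and> N (e E5) E1 = 0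
    \<and> N (e E2) E4 = 0 \<and> N (e E3) E4 = 0 \<and> N (e E5) E4 = 0
    \<and> N (e E3) E2 = 0 \<and> N (e E4) E2 = 0 \<and> N (e E5) E2 = 0
    \<and> N (e E5) E3 = 0 \<and> N (e E3) E5 = 0"
    unfolding h2 h3 h4 h5 by (simp add: Dp_def basis_vec_def)
  have x1: "N (e E1 - e E4) E1 = r1" "N (e E1 - e E4) E4 = - r1"
    unfolding h14 by (simp_all add: Dp_def basis_vec_def)
  have x1': "N (e E1 - e E4) E1 = N (e E1) E1 - N (e E4) E1"
     "N (e E1 - e E4) E4 = N (e E1) E4 - N (e E4) E4"
    unfolding lin_expand[OF lin, of "e E1 - e E4"] by (simp_all add: basis_vec_def)
  have x2: "N (e E2 - e E5) E2 = 2 * t1" "N (e E2 - e E5) E5 = - 2 * t1"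
    unfolding h25 by (simp_all add: Dp_def basis_vec_def)
  have x2': "N (e E2 - e E5) E2 = N (e E2) E2 - N (e E5) E2"
     "N (e E2 - e E5) E5 = N (e E2) E5 - N (e E5) E5"
    unfolding lin_expand[OF lin, of "e E2 - e E5"] by (simp_all add: basis_vec_def)
  show ?thesis unfolding locmat_def using z x1 x1' x2 x2'
    by (simp add: algebra_simps)
qed


lemma comm_clinear:
  assumes "clinear_pi2 N" "clinear_pi2 M"
  shows "clinear_pi2 (\<lambda>x. N (M x) - M (N x))"
proof -
  have A1: "\<And>x y. N (x + y) = N x + N y" and S1: "\<And>c x. N (\<lambda>i. c * x i) = (\<lambda>i. c * N x i)"
   and A2: "\<And>x y. M (x + y) = M x + M y" and S2: "\<And>c x. M (\<lambda>i. c * x i) = (\<lambda>i. c * M x i)"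
    using assms unfolding clinear_pi2_def by blast+
  show ?thesis unfolding clinear_pi2_def
    by (simp add: A1 S1 A2 S2 fun_eq_iff algebra_simps)
qed

lemma comm_locmat:
  assumes ln: "clinear_pi2 N" and lm: "clinear_pi2 M" and cn: "locmat N" and cm: "locmat M"
  shows "locmat (\<lambda>x. N (M x) - M (N x))"
proof -
  have NM: "\<And>j k. N (M (e j)) k = M (e j) E1 * N (e E1) k + M (e j) E2 * N (e E2) k
     + M (e j) E3 * N (e E3) k + M (e j) E4 * N (e E4) k + M (e j) E5 * N (e E5) k"
    by (rule lin_expand[OF ln])
  have MN: "\<And>j k. M (N (e j)) k = N (e j) E1 * M (e E1) k + N (e j) E2 * M (e E2) k
     + N (e j) E3 * M (e E3) k + N (e j) E4 * M (e E4) k + N (e j) E5 * M (e E5) k"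
    by (rule lin_expand[OF lm])
  show ?thesis using cn cm unfolding locmat_def
    by (simp add: NM MN algebra_simps)
qed

lemma sufficiency:
  assumes lin: "clinear_pi2 N" and cn: "locmat N"
  shows "local_derivation_pi2 N"
  unfolding local_derivation_pi2_def
proof (intro conjI allI lin)
  fix x
  have c: "N (e E2) E1 = 0" "N (e E3) E1 = 0" "N (e E4) E1 = 0" "N (e E5) E1 = 0"
    "N (e E2) E4 = 0" "N (e E3) E4 = 0" "N (e E5) E4 = 0"
    "N (e E3) E2 = 0" "N (e E4) E2 = 0" "N (e E5) E2 = 0"
    "N (e E5) E3 = 0" "N (e E3) E5 = 0"
    "N (e E4) E4 = N (e E1) E4 + N (e E1) E1"
    "N (e E5) E5 = N (e E2) E5 + N (e E2) E2"
    using cn unfolding locmat_def by auto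
  have X: "N x E1 = x E1 * N (e E1) E1"
    "N x E2 = x E1 * N (e E1) E2 + x E2 * N (e E2) E2"
    "N x E3 = x E1 * N (e E1) E3 + x E2 * N (e E2) E3 + x E3 * N (e E3) E3 + x E4 * N (e E4) E3"
    "N x E4 = x E1 * N (e E1) E4 + x E4 * (N (e E1) E4 + N (e E1) E1)"
    "N x E5 = x E1 * N (e E1) E5 + x E2 * N (e E2) E5 + x E4 * N (e E4) E5
        + x E5 * (N (e E2) E5 + N (e E2) E2)"
    unfolding lin_expand[OF lin, of x] by (simp_all only: c) simp_all
  have W: "\<exists>D. derivation_pi2 D \<and> N x = D x"
    if "N x = Dp a1 a2 a3 a4 a5 b3 b5 x" for a1 a2 a3 a4 a5 b3 b5
    using that Dp_derivation by blast
  show "\<exists>D. derivation_pi2 D \<and> N x = D x"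
  proof (cases "x E1 = 0")
    case False
    define a1 where "a1 = N (e E1) E1"
    define a2 where "a2 = (N x E2 - 2*a1*x E2)/x E1"
    define a3 where "a3 = (N x E3 - 2*a2*x E2 - 3*a1*x E3)/x E1"
    show ?thesis
    proof (cases "x E1 + x E4 = 0")
      case False2: False
      define a4 where "a4 = (N x E4 - a1*x E4)/(x E1 + x E4)"
      define a5 where "a5 = (N x E5 - 2*a4*x E2 - 2*(a1+a4)*x E5)/x E1"
      have f2: "a2 * x E1 = N x E2 - 2*a1*x E2" using False by (simp add: a2_def)
      have f3: "a3 * x E1 = N x E3 - 2*a2*x E2 - 3*a1*x E3" using False by (simp add: a3_def)
      have f4: "a4 * x E1 + (a1 + a4) * x E4 = N x E4"
      proof -
        have "a4 * (x E1 + x E4) = N x E4 - a1*x E4" using False2 by (simp add: a4_def)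
        then show ?thesis by (simp add: algebra_simps)
      qed
      have f5: "a5 * x E1 = N x E5 - 2*a4*x E2 - 2*(a1+a4)*x E5" using False by (simp add: a5_def)
      have "N x = Dp a1 a2 a3 a4 a5 0 0 x"
      proof (rule ext)
        fix k show "N x k = Dp a1 a2 a3 a4 a5 0 0 x k"
          using f4 by (cases k) (simp_all add: Dp_apply X(1) a1_def f2 f3 f5)
      qed
      then show ?thesis by (rule W)
    next
      case True2: True
      define a5 where "a5 = (N x E5 - 2*a1*x E5)/x E1"
      have "N x = Dp a1 a2 a3 0 a5 0 0 x"
      proof (rule ext)
        fix k show "N x k = Dp a1 a2 a3 0 a5 0 0 x k"
        proof -
          have x4: "x E4 = - x E1" using True2 by (metis neg_eq_iff_add_eq_0)
          have f2: "a2 * x E1 = N x E2 - 2*a1*x E2" using False by (simp add: a2_def)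
          have f3: "a3 * x E1 = N x E3 - 2*a2*x E2 - 3*a1*x E3" using False by (simp add: a3_def)
          have f5: "a5 * x E1 = N x E5 - 2*a1*x E5" using False by (simp add: a5_def)
          show ?thesis
            by (cases k) (simp_all add: Dp_apply X(1) X(4) x4 a1_def f2 f3 f5 algebra_simps)
        qed
      qed
      then show ?thesis by (rule W)
    qed
  next
    case True
    show ?thesis
    proof (cases "x E4 = 0")
      case False4: False
      define a1 where "a1 = N (e E2) E2 / 2"
      define a4 where "a4 = N (e E4) E4 - a1"
      define b3 where "b3 = (N x E3 - 3*a1*x E3)/x E4"
      define b5 where "b5 = (N x E5 - 2*a4*x E2 - 2*(a1+a4)*x E5)/x E4"
      have "N x = Dp a1 0 0 a4 0 b3 b5 x"
      proof (rule ext)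
        fix k show "N x k = Dp a1 0 0 a4 0 b3 b5 x k"
        proof -
          have f3: "b3 * x E4 = N x E3 - 3*a1*x E3" using False4 by (simp add: b3_def)
          have f5: "b5 * x E4 = N x E5 - 2*a4*x E2 - 2*(a1+a4)*x E5" using False4 by (simp add: b5_def)
          show ?thesis using True
            by (cases k) (simp_all add: Dp_apply X(1) X(2) X(4) c(13) a1_def a4_def f3 f5 algebra_simps)
        qed
      qed
      then show ?thesis by (rule W)
    next
      case True4: True
      show ?thesis
      proof (cases "x E2 = 0")
        case False2: False
        define a1 where "a1 = N (e E2) E2 / 2"
        define a2 where "a2 = (N x E3 - 3*a1*x E3)/(2 * x E2)"
        define a4 where "a4 = N (e E2) E5 / 2"
        have "N x = Dp a1 a2 0 a4 0 0 0 x"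
        proof (rule ext)
          fix k show "N x k = Dp a1 a2 0 a4 0 0 0 x k"
          proof -
            have f3: "a2 * (2 * x E2) = N x E3 - 3*a1*x E3" using False2 by (simp add: a2_def)
            show ?thesis using True True4 f3
              by (cases k) (simp_all add: Dp_apply X a1_def a4_def algebra_simps)
          qed
        qed
        then show ?thesis by (rule W)
      next
        case True2: True
        define a1 where "a1 = N (e E3) E3 / 3"
        define a4 where "a4 = (N (e E2) E5 + N (e E2) E2) / 2 - a1"
        have "N x = Dp a1 0 0 a4 0 0 0 x"
        proof (rule ext)
          fix k show "N x k = Dp a1 0 0 a4 0 0 0 x k"
            using True True4 True2
            by (cases k) (simp_all add: Dp_apply X a1_def a4_def field_simps)
        qed
        then show ?thesis by (rule W)
      qed
    qed
  qed
qed

theorem theorem6p2: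
  assumes "local_derivation_pi2 N" and "local_derivation_pi2 M"
  shows "local_derivation_pi2 (\<lambda>x. N (M x) - M (N x))"
proof -
  have ln: "clinear_pi2 N" and lm: "clinear_pi2 M"
    using assms unfolding local_derivation_pi2_def by blast+
  show ?thesis
    by (rule sufficiency[OF comm_clinear[OF ln lm] comm_locmat[OF ln lm necessity[OF assms(1)] necessity[OF assms(2)]]])
qed

end
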